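(* For every $U\in U(4)$ there exist $U_1,U_2,U_3,U_4,U_5,U_6\in U(2)$ such that $$U=(U_1\otimes U_2)\,\cdot\,\mathtt{botCNOT}\,\cdot\,\begin{pmatrix}\mathbf{1}&0\\0&U_3\end{pmatrix}\,\cdot\,(\mathbf{1}\otimes U_4)\,\cdot\,\mathtt{botCNOT}\,\cdot\,(U_5\otimes U_6),$$ where $\begin{pmatrix}\mathbf{1}&0\\0&U_3\end{pmatrix}$ is the $4\times4$ block-diagonal matrix with $2\times 2$ blocks $\mathbf{1}$ and $U_3$.
   Context: $U(n)$ is the group of $n\times n$ unitary matrices, $\mathbf{1}$ the $2\times 2$ identity, $\otimes$ the Kronecker product with respect to the ordered basis $|00\rangle,|01\rangle,|10\rangle,|11\rangle$, and $\cdot$ the matrix product. $\mathtt{botCNOT}$ is the permutation matrix $\begin{pmatrix}1&0&0&0\\0&0&0&1\\0&0&1&0\\0&1&0&0\end{pmatrix}$ (swapping $|01\rangle\leftrightarrow|11\rangle$). *)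

theory Defs
  imports "Jordan_Normal_Form.Matrix"
begin

definition adj :: "complex mat \<Rightarrow> complex mat" where
  "adj A = mat (dim_col A) (dim_row A) (\<lambda>(i, j). cnj (A $$ (j, i)))"

definition unitary :: "nat \<Rightarrow> complex mat \<Rightarrow> bool" where
  "unitary n U \<longleftrightarrow> U \<in> carrier_mat n n \<and> adj U * U = 1\<^sub>m n \<and> U * adj U = 1\<^sub>m n"

text \<open>Kronecker product of two 2x2 matrices, w.r.t. the ordered basis
  |00>,|01>,|10>,|11> (index 2*a+b for |ab>).\<close>
definition kron2 :: "complex mat \<Rightarrow> complex mat \<Rightarrow> complex mat" where
  "kron2 A B = mat 4 4 (\<lambda>(i, j). A $$ (i div 2, j div 2) * B $$ (i mod 2, j mod 2))"

definition botCNOT :: "complex mat" where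
  "botCNOT = mat_of_rows_list 4 [[1,0,0,0],[0,0,0,1],[0,0,1,0],[0,1,0,0]]"

definition ctrl :: "complex mat \<Rightarrow> complex mat" where
  "ctrl U = four_block_mat (1\<^sub>m 2) (0\<^sub>m 2 2) (0\<^sub>m 2 2) U"

end

theory Submission
  imports Defs "Jordan_Normal_Form.Schur_Decomposition"
begin


lemma less4: "(i::nat) < 4 \<Longrightarrow> i = 0 \<or> i = 1 \<or> i = 2 \<or> i = 3" by auto
lemma less2: "(i::nat) < 2 \<Longrightarrow> i = 0 \<or> i = 1" by auto
lemma sum4: "(\<Sum>i\<in>{0..<4::nat}. f i) = f 0 + f 1 + f 2 + (f 3 :: 'a::comm_monoid_add)"
  by (simp add: eval_nat_numeral atLeast0_lessThan_Suc add.commute add.left_commute)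
lemma sum2: "(\<Sum>i\<in>{0..<2::nat}. f i) = f 0 + (f 1 :: 'a::comm_monoid_add)"
  by (simp add: eval_nat_numeral atLeast0_lessThan_Suc add.commute)

definition su2 :: "complex \<Rightarrow> complex \<Rightarrow> complex mat" where
  "su2 a0 a1 = (let n = complex_of_real (sqrt (cmod a0 ^ 2 + cmod a1 ^ 2)) in
     mat 2 2 (\<lambda>(i,j). if i = 0 then (if j = 0 then a0 / n else - cnj a1 / n)
                      else (if j = 0 then a1 / n else cnj a0 / n)))"

lemma cnj_mult_self: "cnj z * z = complex_of_real (cmod z ^ 2)"
  by (metis complex_norm_square mult.commute of_real_power)

lemma su2_unitary:
  assumes "a0 \<noteq> 0 \<or> a1 \<noteq> 0"
  shows "unitary 2 (su2 a0 a1)"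
proof -
  define n where "n = complex_of_real (sqrt (cmod a0 ^ 2 + cmod a1 ^ 2))"
  have pos: "cmod a0 ^ 2 + cmod a1 ^ 2 > 0" using assms by (auto simp: add_pos_nonneg add_nonneg_pos)
  have nn: "cnj n * n = complex_of_real (cmod a0 ^ 2 + cmod a1 ^ 2)" unfolding n_def
    using pos by (simp flip: of_real_mult)
  have n0: "n \<noteq> 0" unfolding n_def using pos assms by auto
  have key: "(cnj a0 * a0 + cnj a1 * a1) / (cnj n * n) = 1"
  proof -
    have e: "cnj a0 * a0 + cnj a1 * a1 = complex_of_real (cmod a0 ^ 2 + cmod a1 ^ 2)"
      by (simp only: cnj_mult_self of_real_add)
    show ?thesis unfolding e nn using pos assms by (simp del: of_real_add of_real_power)
  qed
  have key2: "(a0 * cnj a0 + a1 * cnj a1) / (cnj n * n) = 1"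
    using key by (simp add: mult.commute)
  show ?thesis unfolding unitary_def su2_def Let_def n_def[symmetric]
    apply (intro conjI)
    subgoal by simp
    subgoal apply (rule eq_matI) using key key2 by (auto simp: adj_def scalar_prod_def sum2 field_simps dest!: less2)
    subgoal apply (rule eq_matI) using key key2 by (auto simp: adj_def scalar_prod_def sum2 field_simps dest!: less2)
    done
qed

definition Jv :: "complex vec \<Rightarrow> complex vec" where
  "Jv x = vec 4 (\<lambda>i. if i = 0 then - cnj (x$3) else if i = 1 then cnj (x$2)
                       else if i = 2 then cnj (x$1) else - cnj (x$0))"

lemma kron_su2:
  assumes a: "a0 \<noteq> 0 \<or> a1 \<noteq> 0" and b: "b0 \<noteq> 0 \<or> b1 \<noteq> 0"
    and n: "(cmod a0^2 + cmod a1^2) * (cmod b0^2 + cmod b1^2) = 2"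
  defines "K \<equiv> kron2 (su2 a0 a1) (su2 b0 b1)" and "r \<equiv> complex_of_real (sqrt 2)"
  shows "K $$ (0,0) = a0 * b0 / r" "K $$ (1,0) = a0 * b1 / r" "K $$ (2,0) = a1 * b0 / r"
    "K $$ (3,0) = a1 * b1 / r"
    "K $$ (0,3) = cnj (a1 * b1) / r" "K $$ (1,3) = - cnj (a1 * b0) / r"
    "K $$ (2,3) = - cnj (a0 * b1) / r" "K $$ (3,3) = cnj (a0 * b0) / r"
proof -
  define na where "na = complex_of_real (sqrt (cmod a0 ^ 2 + cmod a1 ^ 2))"
  define nb where "nb = complex_of_real (sqrt (cmod b0 ^ 2 + cmod b1 ^ 2))"
  have nab: "na * nb = r" unfolding na_def nb_def r_def
    by (simp flip: of_real_mult real_sqrt_mult add: n)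
  note d = K_def kron2_def su2_def Let_def na_def[symmetric] nb_def[symmetric]
  show "K $$ (0,0) = a0 * b0 / r" "K $$ (1,0) = a0 * b1 / r" "K $$ (2,0) = a1 * b0 / r"
    "K $$ (3,0) = a1 * b1 / r"
    "K $$ (0,3) = cnj (a1 * b1) / r" "K $$ (1,3) = - cnj (a1 * b0) / r"
    "K $$ (2,3) = - cnj (a0 * b1) / r" "K $$ (3,3) = cnj (a0 * b0) / r"
    unfolding d nab[symmetric] by auto
qed

lemma mult_cnj_self: "z * cnj z = complex_of_real (cmod z ^ 2)"
  by (metis complex_norm_square of_real_power)

lemma norm_sq_vec4:
  assumes "p \<in> carrier_vec 4"
  shows "p \<bullet>c p = complex_of_real (cmod (p$0)^2 + cmod (p$1)^2 + cmod (p$2)^2 + cmod (p$3)^2)"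
  using assms by (simp add: scalar_prod_def sum4 mult_cnj_self)

lemma local_from_ab:
  assumes p: "p \<in> carrier_vec 4"
    and a: "a0 \<noteq> 0 \<or> a1 \<noteq> 0" and b: "b0 \<noteq> 0 \<or> b1 \<noteq> 0"
    and e: "p$0 = a0 * b0" "p$1 = a0 * b1" "p$2 = a1 * b0" "p$3 = a1 * b1"
    and n: "p \<bullet>c p = 2"
  shows "\<exists>A B. unitary 2 A \<and> unitary 2 B \<and>
    (\<forall>i<4. kron2 A B $$ (i,0) = p$i / complex_of_real (sqrt 2)) \<and>
    (\<forall>i<4. kron2 A B $$ (i,3) = - (Jv p)$i / complex_of_real (sqrt 2))"
proof -
  have "complex_of_real (cmod (p$0)^2 + cmod (p$1)^2 + cmod (p$2)^2 + cmod (p$3)^2) = 2"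
    using n norm_sq_vec4[OF p] by simp
  hence "cmod (p$0)^2 + cmod (p$1)^2 + cmod (p$2)^2 + cmod (p$3)^2 = 2"
    by (metis of_real_eq_iff of_real_numeral)
  hence n2: "(cmod a0^2 + cmod a1^2) * (cmod b0^2 + cmod b1^2) = 2"
    unfolding e by (simp add: norm_mult power_mult_distrib algebra_simps)
  note K = kron_su2[OF a b n2]
  have e1: "p $ Suc 0 = a0 * b1" using e(2) by simp
  show ?thesis
    apply (rule exI[of _ "su2 a0 a1"], rule exI[of _ "su2 b0 b1"])
    using su2_unitary[OF a] su2_unitary[OF b] K p
    by (auto simp: e e1 Jv_def dest!: less4)
qed

lemma local_from_p:
  assumes p: "p \<in> carrier_vec 4" and c: "p$0 * p$3 = p$1 * p$2" and n: "p \<bullet>c p = 2"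
  shows "\<exists>A B. unitary 2 A \<and> unitary 2 B \<and>
    (\<forall>i<4. kron2 A B $$ (i,0) = p$i / complex_of_real (sqrt 2)) \<and>
    (\<forall>i<4. kron2 A B $$ (i,3) = - (Jv p)$i / complex_of_real (sqrt 2))"
proof (cases "p$0 \<noteq> 0")
  case True
  show ?thesis
    by (rule local_from_ab[OF p _ _ _ _ _ _ n, of 1 "p$2/p$0" "p$0" "p$1"])
      (use True c in \<open>auto simp: field_simps\<close>)
next
  case False
  show ?thesis
  proof (cases "p$1 \<noteq> 0")
    case True
    show ?thesis
      by (rule local_from_ab[OF p _ _ _ _ _ _ n, of 1 "p$3/p$1" "p$0" "p$1"])
        (use True False c in \<open>auto simp: field_simps\<close>)
  next
    case F2: False
    have "p$2 \<noteq> 0 \<or> p$3 \<noteq> 0"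
      using n False F2 norm_sq_vec4[OF p] by auto
    thus ?thesis
      by (intro local_from_ab[OF p _ _ _ _ _ _ n, of 0 1 "p$2" "p$3"])
        (use False F2 in auto)
  qed
qed

lemma Jv_carrier[simp]: "Jv x \<in> carrier_vec 4" and dim_Jv[simp]: "dim_vec (Jv x) = 4"
  by (auto simp: Jv_def)

lemma Jv_Jv: "x \<in> carrier_vec 4 \<Longrightarrow> Jv (Jv x) = x"
  by (rule eq_vecI) (auto simp: Jv_def dest!: less4)

lemma Jv_add: "x \<in> carrier_vec 4 \<Longrightarrow> y \<in> carrier_vec 4 \<Longrightarrow> Jv (x + y) = Jv x + Jv y"
  by (rule eq_vecI) (auto simp: Jv_def dest!: less4)

lemma Jv_minus: "x \<in> carrier_vec 4 \<Longrightarrow> y \<in> carrier_vec 4 \<Longrightarrow> Jv (x - y) = Jv x - Jv y"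
  by (rule eq_vecI) (auto simp: Jv_def dest!: less4)

lemma Jv_smult: "x \<in> carrier_vec 4 \<Longrightarrow> Jv (a \<cdot>\<^sub>v x) = cnj a \<cdot>\<^sub>v Jv x"
  by (rule eq_vecI) (auto simp: Jv_def dest!: less4)

lemma Jv_ip: "x \<in> carrier_vec 4 \<Longrightarrow> y \<in> carrier_vec 4 \<Longrightarrow> Jv x \<bullet>c Jv y = y \<bullet>c x"
  by (simp add: Jv_def scalar_prod_def sum4 algebra_simps)

lemma ip_add_l: fixes x y z :: "complex vec" shows "x \<in> carrier_vec 4 \<Longrightarrow> y \<in> carrier_vec 4 \<Longrightarrow> z \<in> carrier_vec 4 \<Longrightarrow> (x + y) \<bullet>c z = x \<bullet>c z + y \<bullet>c z"
  by (simp add: scalar_prod_def sum4 algebra_simps)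
lemma ip_minus_l: fixes x y z :: "complex vec" shows "x \<in> carrier_vec 4 \<Longrightarrow> y \<in> carrier_vec 4 \<Longrightarrow> z \<in> carrier_vec 4 \<Longrightarrow> (x - y) \<bullet>c z = x \<bullet>c z - y \<bullet>c z"
  by (simp add: scalar_prod_def sum4 algebra_simps)
lemma ip_add_r: fixes x y z :: "complex vec" shows "x \<in> carrier_vec 4 \<Longrightarrow> y \<in> carrier_vec 4 \<Longrightarrow> z \<in> carrier_vec 4 \<Longrightarrow> z \<bullet>c (x + y) = z \<bullet>c x + z \<bullet>c y"
  by (simp add: scalar_prod_def sum4 algebra_simps)
lemma ip_minus_r: fixes x y z :: "complex vec" shows "x \<in> carrier_vec 4 \<Longrightarrow> y \<in> carrier_vec 4 \<Longrightarrow> z \<in> carrier_vec 4 \<Longrightarrow> z \<bullet>c (x - y) = z \<bullet>c x - z \<bullet>c y"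
  by (simp add: scalar_prod_def sum4 algebra_simps)
lemma ip_smult_l: fixes x y z :: "complex vec" shows "x \<in> carrier_vec 4 \<Longrightarrow> z \<in> carrier_vec 4 \<Longrightarrow> (a \<cdot>\<^sub>v x) \<bullet>c z = a * (x \<bullet>c z)"
  by (simp add: scalar_prod_def sum4 algebra_simps)
lemma ip_smult_r: fixes x y z :: "complex vec" shows "x \<in> carrier_vec 4 \<Longrightarrow> z \<in> carrier_vec 4 \<Longrightarrow> z \<bullet>c (a \<cdot>\<^sub>v x) = cnj a * (z \<bullet>c x)"
  by (simp add: scalar_prod_def sum4 algebra_simps)
lemma ip_sym: fixes x y z :: "complex vec" shows "x \<in> carrier_vec 4 \<Longrightarrow> y \<in> carrier_vec 4 \<Longrightarrow> y \<bullet>c x = cnj (x \<bullet>c y)"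
  by (simp add: scalar_prod_def sum4 algebra_simps)
lemma ip_zero: fixes x y z :: "complex vec" shows "x \<in> carrier_vec 4 \<Longrightarrow> x \<bullet>c x = 0 \<longleftrightarrow> x = 0\<^sub>v 4"
  by (rule conjugate_square_eq_0_vec)

definition Sm :: "complex mat \<Rightarrow> complex mat" where
  "Sm U = mat 4 4 (\<lambda>(i,j). (Jv (adj U *\<^sub>v Jv (U *\<^sub>v unit_vec 4 j)))$i)"

lemma Sm_carrier[simp]: "Sm U \<in> carrier_mat 4 4" by (simp add: Sm_def)
lemma Sm_dim[simp]: "dim_row (Sm U) = 4" "dim_col (Sm U) = 4" by (simp_all add: Sm_def)

lemma Sm_mult:
  assumes U: "U \<in> carrier_mat 4 4" and x: "x \<in> carrier_vec 4"
  shows "Sm U *\<^sub>v x = Jv (adj U *\<^sub>v Jv (U *\<^sub>v x))"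
  apply (rule eq_vecI)
  using U x
  by (auto simp: Sm_def Jv_def adj_def scalar_prod_def sum4 algebra_simps dest!: less4)

lemma adj_carrier[simp]: "A \<in> carrier_mat n m \<Longrightarrow> adj A \<in> carrier_mat m n"
  by (auto simp: adj_def)

lemma adj_adj: "A \<in> carrier_mat n m \<Longrightarrow> adj (adj A) = A"
  by (rule eq_matI) (auto simp: adj_def)

lemma adj_ip:
  fixes A :: "complex mat"
  assumes "A \<in> carrier_mat 4 4" "x \<in> carrier_vec 4" "y \<in> carrier_vec 4"
  shows "(A *\<^sub>v x) \<bullet>c y = x \<bullet>c (adj A *\<^sub>v y)"
  using assms by (simp add: adj_def scalar_prod_def sum4 algebra_simps)

lemma iso:
  fixes U :: "complex mat"
  assumes U: "U \<in> carrier_mat 4 4" and u: "adj U * U = 1\<^sub>m 4"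
    and x: "x \<in> carrier_vec 4" and y: "y \<in> carrier_vec 4"
  shows "(U *\<^sub>v x) \<bullet>c (U *\<^sub>v y) = x \<bullet>c y"
proof -
  have "(U *\<^sub>v x) \<bullet>c (U *\<^sub>v y) = x \<bullet>c (adj U *\<^sub>v (U *\<^sub>v y))"
    using adj_ip[OF U x] U y by simp
  also have "adj U *\<^sub>v (U *\<^sub>v y) = y"
    using assoc_mult_mat_vec[of "adj U" 4 4 U 4 y, symmetric] U y u by simp
  finally show ?thesis .
qed

lemma unitary_adj: "unitary n U \<Longrightarrow> unitary n (adj U)"
  unfolding unitary_def by (auto simp: adj_adj)

lemma unitary_inv1: "unitary n U \<Longrightarrow> x \<in> carrier_vec n \<Longrightarrow> adj U *\<^sub>v (U *\<^sub>v x) = x"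
  unfolding unitary_def using assoc_mult_mat_vec[of "adj U" n n U n x, symmetric] by auto
lemma unitary_inv2: "unitary n U \<Longrightarrow> x \<in> carrier_vec n \<Longrightarrow> U *\<^sub>v (adj U *\<^sub>v x) = x"
  unfolding unitary_def using assoc_mult_mat_vec[of U n n "adj U" n x, symmetric] by auto

lemma unitary_iso: "unitary 4 U \<Longrightarrow> x \<in> carrier_vec 4 \<Longrightarrow> y \<in> carrier_vec 4 \<Longrightarrow>
   (U *\<^sub>v x) \<bullet>c (U *\<^sub>v y) = x \<bullet>c y"
  unfolding unitary_def using iso by blast

lemma unitary_carrier: "unitary n U \<Longrightarrow> U \<in> carrier_mat n n" unfolding unitary_def by auto

locale uctx =
  fixes U :: "complex mat"
  assumes U: "unitary 4 U"
begin

lemma Uc[simp]: "U \<in> carrier_mat 4 4" using U unitary_carrier by blast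
lemma Uv[simp]: "v \<in> carrier_vec 4 \<Longrightarrow> U *\<^sub>v v \<in> carrier_vec 4"
  by (rule mult_mat_vec_carrier[OF Uc])
lemma aUv[simp]: "v \<in> carrier_vec 4 \<Longrightarrow> adj U *\<^sub>v v \<in> carrier_vec 4"
  by (rule mult_mat_vec_carrier[OF adj_carrier[OF Uc]])

lemma S_iso: "x \<in> carrier_vec 4 \<Longrightarrow> y \<in> carrier_vec 4 \<Longrightarrow>
   (Sm U *\<^sub>v x) \<bullet>c (Sm U *\<^sub>v y) = x \<bullet>c y"
  by (simp add: Sm_mult Jv_ip unitary_iso[OF unitary_adj[OF U]] unitary_iso[OF U])

lemma S_J: "x \<in> carrier_vec 4 \<Longrightarrow> Sm U *\<^sub>v Jv (Sm U *\<^sub>v x) = Jv x"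
  by (simp add: Sm_mult Jv_Jv unitary_inv1[OF U] unitary_inv2[OF U])

lemma U_J: "x \<in> carrier_vec 4 \<Longrightarrow> U *\<^sub>v Jv (Sm U *\<^sub>v x) = Jv (U *\<^sub>v x)"
  by (simp add: Sm_mult Jv_Jv unitary_inv1[OF U] unitary_inv2[OF U])

lemma S_lin: "x \<in> carrier_vec 4 \<Longrightarrow> y \<in> carrier_vec 4 \<Longrightarrow>
   Sm U *\<^sub>v (a \<cdot>\<^sub>v x + b \<cdot>\<^sub>v y) = a \<cdot>\<^sub>v (Sm U *\<^sub>v x) + b \<cdot>\<^sub>v (Sm U *\<^sub>v y)"
  by (simp add: mult_add_distrib_mat_vec[of _ 4 4] mult_mat_vec[of _ 4 4])

lemma Sv[simp]: "v \<in> carrier_vec 4 \<Longrightarrow> Sm U *\<^sub>v v \<in> carrier_vec 4"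
  by (rule mult_mat_vec_carrier[OF Sm_carrier])

lemma ev_norm:
  assumes v: "v \<in> carrier_vec 4" "v \<noteq> 0\<^sub>v 4" and e: "Sm U *\<^sub>v v = l \<cdot>\<^sub>v v"
  shows "l * cnj l = 1"
proof -
  have "(l \<cdot>\<^sub>v v) \<bullet>c (l \<cdot>\<^sub>v v) = v \<bullet>c v" using S_iso[OF v(1) v(1)] e by simp
  hence "l * cnj l * (v \<bullet>c v) = v \<bullet>c v" using v(1) by (simp add: ip_smult_l ip_smult_r mult.commute)
  moreover have "v \<bullet>c v \<noteq> 0" using ip_zero v by blast
  ultimately show ?thesis by simp
qed

lemma ev_J:
  assumes v: "v \<in> carrier_vec 4" "v \<noteq> 0\<^sub>v 4" and e: "Sm U *\<^sub>v v = l \<cdot>\<^sub>v v"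
  shows "Sm U *\<^sub>v Jv v = l \<cdot>\<^sub>v Jv v"
proof -
  have n: "l * cnj l = 1" by (rule ev_norm[OF v e])
  have "Sm U *\<^sub>v Jv (l \<cdot>\<^sub>v v) = Jv v" using S_J[OF v(1)] e by simp
  hence h: "cnj l \<cdot>\<^sub>v (Sm U *\<^sub>v Jv v) = Jv v"
    using v(1) by (simp add: Jv_smult mult_mat_vec[of _ 4 4])
  show ?thesis
  proof (rule eq_vecI)
    fix i assume i: "i < dim_vec (l \<cdot>\<^sub>v Jv v)"
    have "cnj l * (Sm U *\<^sub>v Jv v) $ i = Jv v $ i" using arg_cong[OF h, of "\<lambda>x. x $ i"] i by simp
    hence "l * cnj l * (Sm U *\<^sub>v Jv v) $ i = l * Jv v $ i" by (simp add: mult.assoc)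
    thus "(Sm U *\<^sub>v Jv v) $ i = (l \<cdot>\<^sub>v Jv v) $ i" using n i by simp
  qed simp
qed

lemma ev_orth:
  assumes v: "v \<in> carrier_vec 4" and w: "w \<in> carrier_vec 4" "w \<noteq> 0\<^sub>v 4"
    and ev: "Sm U *\<^sub>v v = l \<cdot>\<^sub>v v" and ew: "Sm U *\<^sub>v w = m \<cdot>\<^sub>v w" and lm: "l \<noteq> m"
  shows "v \<bullet>c w = 0"
proof (rule ccontr)
  assume nz: "v \<bullet>c w \<noteq> 0"
  have nm: "m * cnj m = 1" by (rule ev_norm[OF w ew])
  have "(l \<cdot>\<^sub>v v) \<bullet>c (m \<cdot>\<^sub>v w) = v \<bullet>c w" using S_iso[OF v w(1)] ev ew by simp
  hence "l * cnj m * (v \<bullet>c w) = v \<bullet>c w" using v w by (simp add: ip_smult_l ip_smult_r mult.commute)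
  hence "l * cnj m = 1" using nz by simp
  hence "l * cnj m * m = m" by simp
  hence "l = m" using nm by (simp add: mult.assoc mult.commute[of "cnj m"])
  thus False using lm by simp
qed

lemma ev_real:
  assumes v: "v \<in> carrier_vec 4" "v \<noteq> 0\<^sub>v 4" and e: "Sm U *\<^sub>v v = l \<cdot>\<^sub>v v"
  shows "\<exists>w. w \<in> carrier_vec 4 \<and> w \<noteq> 0\<^sub>v 4 \<and> Jv w = w \<and> Sm U *\<^sub>v w = l \<cdot>\<^sub>v w \<and>
    (\<forall>u. u \<in> carrier_vec 4 \<longrightarrow> Jv u = u \<longrightarrow> v \<bullet>c u = 0 \<longrightarrow> w \<bullet>c u = 0)"
proof -
  have eJ: "Sm U *\<^sub>v Jv v = l \<cdot>\<^sub>v Jv v" by (rule ev_J[OF v e])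
  have Jorth: "Jv v \<bullet>c u = 0" if u: "u \<in> carrier_vec 4" "Jv u = u" "v \<bullet>c u = 0" for u
  proof -
    have "Jv v \<bullet>c u = Jv v \<bullet>c Jv u" using u by simp
    also have "\<dots> = u \<bullet>c v" by (rule Jv_ip[OF v(1) u(1)])
    also have "\<dots> = 0" using ip_sym[OF u(1) v(1)] u by simp
    finally show ?thesis .
  qed
  show ?thesis
  proof (cases "v + Jv v = 0\<^sub>v 4")
    case False
    show ?thesis
    proof (intro exI[of _ "v + Jv v"] conjI allI impI)
      show "v + Jv v \<in> carrier_vec 4" using v by simp
      show "v + Jv v \<noteq> 0\<^sub>v 4" by fact
      show "Jv (v + Jv v) = v + Jv v" using v by (intro eq_vecI) (auto simp: Jv_def dest!: less4)
      show "Sm U *\<^sub>v (v + Jv v) = l \<cdot>\<^sub>v (v + Jv v)"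
      proof -
        have "Sm U *\<^sub>v (v + Jv v) = Sm U *\<^sub>v v + Sm U *\<^sub>v Jv v"
          by (rule mult_add_distrib_mat_vec[OF Sm_carrier v(1) Jv_carrier])
        also have "\<dots> = l \<cdot>\<^sub>v v + l \<cdot>\<^sub>v Jv v" using e eJ by simp
        also have "\<dots> = l \<cdot>\<^sub>v (v + Jv v)" by (rule smult_add_distrib_vec[symmetric, OF v(1) Jv_carrier])
        finally show ?thesis .
      qed
      fix u assume u: "u \<in> carrier_vec 4" "Jv u = u" "v \<bullet>c u = 0"
      show "(v + Jv v) \<bullet>c u = 0" using Jorth[OF u] u v by (simp add: ip_add_l)
    qed
  next
    case True
    have Jvv: "Jv v = - v"
    proof (rule eq_vecI)
      fix i assume i: "i < dim_vec (- v)"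
      have "(v + Jv v) $ i = 0" using True i v by simp
      hence "v $ i + Jv v $ i = 0" using i v by simp
      hence "- (v $ i) = Jv v $ i" by (subst neg_eq_iff_add_eq_0)
      thus "Jv v $ i = (- v) $ i" using i v by simp
    qed (use v in simp)
    have w0: "\<i> \<cdot>\<^sub>v (v - Jv v) \<noteq> 0\<^sub>v 4"
    proof
      assume "\<i> \<cdot>\<^sub>v (v - Jv v) = 0\<^sub>v 4"
      hence h: "\<And>i. i < 4 \<Longrightarrow> (\<i> \<cdot>\<^sub>v (v - Jv v)) $ i = 0" by simp
      have "v = 0\<^sub>v 4"
      proof (rule eq_vecI)
        fix i assume i: "i < dim_vec (0\<^sub>v 4 :: complex vec)"
        show "v $ i = 0\<^sub>v 4 $ i" using h[of i] i v unfolding Jvv by simp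
      qed (use v in simp)
      thus False using v by simp
    qed
    show ?thesis
    proof (intro exI[of _ "\<i> \<cdot>\<^sub>v (v - Jv v)"] conjI allI impI)
      show "\<i> \<cdot>\<^sub>v (v - Jv v) \<in> carrier_vec 4" using v by simp
      show "\<i> \<cdot>\<^sub>v (v - Jv v) \<noteq> 0\<^sub>v 4" by fact
      show "Jv (\<i> \<cdot>\<^sub>v (v - Jv v)) = \<i> \<cdot>\<^sub>v (v - Jv v)"
      proof -
        have "Jv (\<i> \<cdot>\<^sub>v (v - Jv v)) = cnj \<i> \<cdot>\<^sub>v (Jv v - v)"
          using v by (simp add: Jv_smult Jv_minus Jv_Jv)
        thus ?thesis using v by (intro eq_vecI) (auto simp: algebra_simps)
      qed
      show "Sm U *\<^sub>v (\<i> \<cdot>\<^sub>v (v - Jv v)) = l \<cdot>\<^sub>v (\<i> \<cdot>\<^sub>v (v - Jv v))"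
      proof -
        have "Sm U *\<^sub>v (\<i> \<cdot>\<^sub>v (v - Jv v)) = \<i> \<cdot>\<^sub>v (Sm U *\<^sub>v (v - Jv v))"
          by (rule mult_mat_vec[OF Sm_carrier]) (use v in simp)
        also have "Sm U *\<^sub>v (v - Jv v) = Sm U *\<^sub>v v - Sm U *\<^sub>v Jv v"
          by (rule mult_minus_distrib_mat_vec[OF Sm_carrier v(1) Jv_carrier])
        also have "\<dots> = l \<cdot>\<^sub>v v - l \<cdot>\<^sub>v Jv v" using e eJ by simp
        finally show ?thesis using v
          by (intro eq_vecI) (auto simp: algebra_simps)
      qed
      fix u assume u: "u \<in> carrier_vec 4" "Jv u = u" "v \<bullet>c u = 0"
      show "(\<i> \<cdot>\<^sub>v (v - Jv v)) \<bullet>c u = 0" using Jorth[OF u] u v by (simp add: ip_smult_l ip_minus_l)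
    qed
  qed
qed


lemma ev_normalize:
  assumes w: "w \<in> carrier_vec 4" "w \<noteq> 0\<^sub>v 4" and J: "Jv w = w" and e: "Sm U *\<^sub>v w = l \<cdot>\<^sub>v w"
  shows "\<exists>f. f \<in> carrier_vec 4 \<and> Jv f = f \<and> f \<bullet>c f = 1 \<and> Sm U *\<^sub>v f = l \<cdot>\<^sub>v f \<and>
    (\<forall>u. u \<in> carrier_vec 4 \<longrightarrow> w \<bullet>c u = 0 \<longrightarrow> f \<bullet>c u = 0)"
proof -
  define r where "r = cmod (w$0)^2 + cmod (w$1)^2 + cmod (w$2)^2 + cmod (w$3)^2"
  have wr: "w \<bullet>c w = complex_of_real r" unfolding r_def by (rule norm_sq_vec4[OF w(1)])
  have "w \<bullet>c w \<noteq> 0" using ip_zero w by blast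
  hence "r \<noteq> 0" using wr by simp
  moreover have "r \<ge> 0" unfolding r_def by simp
  ultimately have r: "r > 0" by simp
  define c where "c = complex_of_real (1 / sqrt r)"
  have cc: "cnj c = c" unfolding c_def by simp
  have c1: "c * c * complex_of_real r = 1" unfolding c_def using r
    by (simp flip: of_real_mult) 
  show ?thesis
  proof (intro exI[of _ "c \<cdot>\<^sub>v w"] conjI allI impI)
    show "c \<cdot>\<^sub>v w \<in> carrier_vec 4" using w by simp
    show "Jv (c \<cdot>\<^sub>v w) = c \<cdot>\<^sub>v w" using w J cc by (simp add: Jv_smult)
    show "(c \<cdot>\<^sub>v w) \<bullet>c (c \<cdot>\<^sub>v w) = 1" using w cc c1 wr
      by (simp add: ip_smult_l ip_smult_r mult.assoc)
    show "Sm U *\<^sub>v (c \<cdot>\<^sub>v w) = l \<cdot>\<^sub>v (c \<cdot>\<^sub>v w)"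
      using w e by (simp add: mult_mat_vec[OF Sm_carrier] smult_smult_assoc mult.commute)
    fix u assume "u \<in> carrier_vec 4" "w \<bullet>c u = 0"
    thus "(c \<cdot>\<^sub>v w) \<bullet>c u = 0" using w by (simp add: ip_smult_l)
  qed
qed


lemma two_eigs:
  "\<exists>v1 v2 l1 l2. v1 \<in> carrier_vec 4 \<and> v2 \<in> carrier_vec 4 \<and> v1 \<noteq> 0\<^sub>v 4 \<and> v2 \<noteq> 0\<^sub>v 4 \<and>
     Sm U *\<^sub>v v1 = l1 \<cdot>\<^sub>v v1 \<and> Sm U *\<^sub>v v2 = l2 \<cdot>\<^sub>v v2 \<and> v2 \<bullet>c v1 = 0"
proof -
  obtain es where cp: "char_poly (Sm U) = (\<Prod>a\<leftarrow>es. [:-a, 1:])"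
    using char_poly_factorized[OF Sm_carrier] by blast
  obtain B P Q where sd: "schur_decomposition (Sm U) es = (B,P,Q)" by (cases "schur_decomposition (Sm U) es") auto
  from schur_decomposition[OF Sm_carrier cp sd]
  have sw: "similar_mat_wit (Sm U) B P Q" and ut: "upper_triangular B" by auto
  from sw have B: "B \<in> carrier_mat 4 4" and P: "P \<in> carrier_mat 4 4" and Q: "Q \<in> carrier_mat 4 4"
    and QP: "Q * P = 1\<^sub>m 4" and SPBQ: "Sm U = P * B * Q"
    unfolding similar_mat_wit_def Let_def by auto
  have SP: "Sm U * P = P * B"
  proof -
    have "Sm U * P = P * B * (Q * P)" unfolding SPBQ by (rule assoc_mult_mat) (use P B Q in auto)
    thus ?thesis using QP P B by simp
  qed
  have Bz: "B $$ (i, j) = 0" if "j < i" "i < 4" for i j using ut that B unfolding upper_triangular_def by auto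
  define p0 where "p0 = col P 0"
  define p1 where "p1 = col P 1"
  have p0c: "p0 \<in> carrier_vec 4" unfolding p0_def using P by (intro carrier_vecI) simp
  have p1c: "p1 \<in> carrier_vec 4" unfolding p1_def using P by (intro carrier_vecI) simp
  have colS: "Sm U *\<^sub>v col P j = P *\<^sub>v col B j" if "j < 4" for j
  proof -
    have "Sm U *\<^sub>v col P j = col (Sm U * P) j" by (rule col_mult2[symmetric, OF Sm_carrier P that])
    also have "\<dots> = col (P * B) j" unfolding SP ..
    also have "\<dots> = P *\<^sub>v col B j" by (rule col_mult2[OF P B that])
    finally show ?thesis .
  qed
  have Sp0: "Sm U *\<^sub>v p0 = B $$ (0,0) \<cdot>\<^sub>v p0"
  proof -
    have "Sm U *\<^sub>v p0 = P *\<^sub>v col B 0" unfolding p0_def by (rule colS) simp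
    thus ?thesis unfolding p0_def using P B Bz
      by (intro eq_vecI) (auto simp: scalar_prod_def sum4)
  qed
  have Sp1: "Sm U *\<^sub>v p1 = B $$ (0,1) \<cdot>\<^sub>v p0 + B $$ (1,1) \<cdot>\<^sub>v p1"
  proof -
    have "Sm U *\<^sub>v p1 = P *\<^sub>v col B 1" unfolding p1_def by (rule colS) simp
    thus ?thesis unfolding p0_def p1_def using P B Bz
      by (intro eq_vecI) (auto simp: scalar_prod_def sum4)
  qed
  have qp00: "row Q 0 \<bullet> p0 = 1" using arg_cong[OF QP, of "\<lambda>M. M $$ (0,0)"] P Q unfolding p0_def by simp
  have qp10: "row Q 1 \<bullet> p0 = 0" using arg_cong[OF QP, of "\<lambda>M. M $$ (1,0)"] P Q unfolding p0_def by simp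
  have qp11: "row Q 1 \<bullet> p1 = 1" using arg_cong[OF QP, of "\<lambda>M. M $$ (1,1)"] P Q unfolding p1_def by simp
  have p0nz: "p0 \<noteq> 0\<^sub>v 4" using qp00 Q by (auto simp: scalar_prod_def)
  have pp0: "p0 \<bullet>c p0 \<noteq> 0" using ip_zero p0c p0nz by blast
  define c where "c = (p1 \<bullet>c p0) / (p0 \<bullet>c p0)"
  define q where "q = p1 - c \<cdot>\<^sub>v p0"
  have qc: "q \<in> carrier_vec 4" unfolding q_def using p0c p1c by simp
  have qnz: "q \<noteq> 0\<^sub>v 4"
  proof
    assume "q = 0\<^sub>v 4"
    hence h: "\<And>i. i < 4 \<Longrightarrow> (p1 - c \<cdot>\<^sub>v p0) $ i = 0" unfolding q_def by simp
    have "p1 = c \<cdot>\<^sub>v p0"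
    proof (rule eq_vecI)
      fix i assume "i < dim_vec (c \<cdot>\<^sub>v p0)"
      thus "p1 $ i = (c \<cdot>\<^sub>v p0) $ i" using h[of i] p0c p1c by simp
    qed (use p0c p1c in simp)
    hence "row Q 1 \<bullet> p1 = c * (row Q 1 \<bullet> p0)" using p0c Q by simp
    thus False using qp10 qp11 by simp
  qed
  have qorth: "q \<bullet>c p0 = 0" unfolding q_def c_def using p0c p1c pp0 by (simp add: ip_minus_l ip_smult_l)
  define d where "d = B $$ (0,1) + c * B $$ (1,1) - c * B $$ (0,0)"
  have Sq: "Sm U *\<^sub>v q = B $$ (1,1) \<cdot>\<^sub>v q + d \<cdot>\<^sub>v p0"
  proof -
    have "Sm U *\<^sub>v q = Sm U *\<^sub>v p1 - c \<cdot>\<^sub>v (Sm U *\<^sub>v p0)" unfolding q_def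
      using p0c p1c by (simp add: mult_minus_distrib_mat_vec[OF Sm_carrier] mult_mat_vec[OF Sm_carrier])
    thus ?thesis unfolding Sp0 Sp1 q_def d_def using p0c p1c
      by (intro eq_vecI) (auto simp: algebra_simps)
  qed
  have n0: "B $$ (0,0) * cnj (B $$ (0,0)) = 1" by (rule ev_norm[OF p0c p0nz Sp0])
  have "(Sm U *\<^sub>v q) \<bullet>c (Sm U *\<^sub>v p0) = q \<bullet>c p0" by (rule S_iso[OF qc p0c])
  hence "(B $$ (1,1) \<cdot>\<^sub>v q + d \<cdot>\<^sub>v p0) \<bullet>c (B $$ (0,0) \<cdot>\<^sub>v p0) = 0" unfolding Sq Sp0 qorth .
  hence "cnj (B $$ (0,0)) * (d * (p0 \<bullet>c p0)) = 0" using qc p0c qorth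
    by (simp add: ip_smult_l ip_smult_r ip_add_l)
  hence "d = 0" using n0 pp0 by auto
  hence Sq': "Sm U *\<^sub>v q = B $$ (1,1) \<cdot>\<^sub>v q" unfolding Sq using qc p0c
    by (intro eq_vecI) auto
  show ?thesis
    by (intro exI[of _ p0] exI[of _ q] exI[of _ "B $$ (0,0)"] exI[of _ "B $$ (1,1)"])
      (use p0c qc p0nz qnz Sp0 Sq' qorth in auto)
qed

end


context uctx begin

lemma proj_eig:
  assumes x: "x \<in> carrier_vec 4" and w: "w \<in> carrier_vec 4"
    and ex: "Sm U *\<^sub>v x = m \<cdot>\<^sub>v x" and ew: "Sm U *\<^sub>v w = l \<cdot>\<^sub>v w"
    and ml: "m = l \<or> x \<bullet>c w = 0"
  shows "Sm U *\<^sub>v (x - ((x \<bullet>c w) / (w \<bullet>c w)) \<cdot>\<^sub>v w) = m \<cdot>\<^sub>v (x - ((x \<bullet>c w) / (w \<bullet>c w)) \<cdot>\<^sub>v w)"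
proof -
  define c where "c = (x \<bullet>c w) / (w \<bullet>c w)"
  have cl: "c * l = c * m" using ml unfolding c_def by auto
  have "Sm U *\<^sub>v (x - c \<cdot>\<^sub>v w) = Sm U *\<^sub>v x - c \<cdot>\<^sub>v (Sm U *\<^sub>v w)"
    using x w by (simp add: mult_minus_distrib_mat_vec[OF Sm_carrier] mult_mat_vec[OF Sm_carrier])
  also have "\<dots> = m \<cdot>\<^sub>v (x - c \<cdot>\<^sub>v w)" unfolding ex ew using x w cl
    by (intro eq_vecI) (auto simp: algebra_simps)
  finally show ?thesis unfolding c_def .
qed

lemma proj_orth:
  fixes x w :: "complex vec"
  assumes x: "x \<in> carrier_vec 4" and w: "w \<in> carrier_vec 4" "w \<bullet>c w \<noteq> 0"
  shows "(x - ((x \<bullet>c w) / (w \<bullet>c w)) \<cdot>\<^sub>v w) \<bullet>c w = 0"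
proof -
  define c where "c = (x \<bullet>c w) / (w \<bullet>c w)"
  have "(x - c \<cdot>\<^sub>v w) \<bullet>c w = x \<bullet>c w - c * (w \<bullet>c w)"
    using ip_minus_l[of x "c \<cdot>\<^sub>v w" w] ip_smult_l[of w w c] x w by simp
  also have "\<dots> = 0" using w unfolding c_def by simp
  finally show ?thesis unfolding c_def .
qed

lemma real_pair:
  "\<exists>f1 f2 m1 m2. f1 \<in> carrier_vec 4 \<and> f2 \<in> carrier_vec 4 \<and> Jv f1 = f1 \<and> Jv f2 = f2 \<and>
     f1 \<bullet>c f1 = 1 \<and> f2 \<bullet>c f2 = 1 \<and> f1 \<bullet>c f2 = 0 \<and>
     Sm U *\<^sub>v f1 = m1 \<cdot>\<^sub>v f1 \<and> Sm U *\<^sub>v f2 = m2 \<cdot>\<^sub>v f2"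
proof -
  obtain v1 v2 l1 l2 where v1: "v1 \<in> carrier_vec 4" "v1 \<noteq> 0\<^sub>v 4" and v2: "v2 \<in> carrier_vec 4" "v2 \<noteq> 0\<^sub>v 4"
    and e1: "Sm U *\<^sub>v v1 = l1 \<cdot>\<^sub>v v1" and e2: "Sm U *\<^sub>v v2 = l2 \<cdot>\<^sub>v v2" and o12: "v2 \<bullet>c v1 = 0"
    using two_eigs by blast
  obtain w1 where w1: "w1 \<in> carrier_vec 4" "w1 \<noteq> 0\<^sub>v 4" "Jv w1 = w1" and ew1: "Sm U *\<^sub>v w1 = l1 \<cdot>\<^sub>v w1"
    using ev_real[OF v1 e1] by blast
  have ww: "w1 \<bullet>c w1 \<noteq> 0" using ip_zero w1 by blast
  define a where "a = (v1 \<bullet>c w1) / (w1 \<bullet>c w1)"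
  define b where "b = (v2 \<bullet>c w1) / (w1 \<bullet>c w1)"
  define ga where "ga = v1 - a \<cdot>\<^sub>v w1"
  define gb where "gb = v2 - b \<cdot>\<^sub>v w1"
  have gac: "ga \<in> carrier_vec 4" and gbc: "gb \<in> carrier_vec 4" unfolding ga_def gb_def using v1 v2 w1 by auto
  have ega: "Sm U *\<^sub>v ga = l1 \<cdot>\<^sub>v ga" unfolding ga_def a_def
    by (rule proj_eig[OF v1(1) w1(1) e1 ew1]) simp
  have egb: "Sm U *\<^sub>v gb = l2 \<cdot>\<^sub>v gb" unfolding gb_def b_def
    by (rule proj_eig[OF v2(1) w1(1) e2 ew1]) (use ev_orth[OF v2(1) w1(1) w1(2) e2 ew1] in blast)
  have oa: "ga \<bullet>c w1 = 0" unfolding ga_def a_def by (rule proj_orth[OF v1(1) w1(1) ww])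
  have ob: "gb \<bullet>c w1 = 0" unfolding gb_def b_def by (rule proj_orth[OF v2(1) w1(1) ww])
  have "\<exists>g m. g \<in> carrier_vec 4 \<and> g \<noteq> 0\<^sub>v 4 \<and> g \<bullet>c w1 = 0 \<and> Sm U *\<^sub>v g = m \<cdot>\<^sub>v g"
  proof (cases "ga = 0\<^sub>v 4 \<and> gb = 0\<^sub>v 4")
    case True
    have va: "v1 = a \<cdot>\<^sub>v w1"
    proof (rule eq_vecI)
      fix i assume i: "i < dim_vec (a \<cdot>\<^sub>v w1)"
      have "ga $ i = 0" using True i w1 by simp
      thus "v1 $ i = (a \<cdot>\<^sub>v w1) $ i" unfolding ga_def using i v1 w1 by simp
    qed (use v1 w1 in simp)
    have vb: "v2 = b \<cdot>\<^sub>v w1"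
    proof (rule eq_vecI)
      fix i assume i: "i < dim_vec (b \<cdot>\<^sub>v w1)"
      have "gb $ i = 0" using True i w1 by simp
      thus "v2 $ i = (b \<cdot>\<^sub>v w1) $ i" unfolding gb_def using i v2 w1 by simp
    qed (use v2 w1 in simp)
    have "b * cnj a * (w1 \<bullet>c w1) = 0" using o12 unfolding va vb using w1
      by (auto simp: ip_smult_l ip_smult_r)
    hence "b = 0 \<or> a = 0" using ww by auto
    hence "v1 = 0\<^sub>v 4 \<or> v2 = 0\<^sub>v 4" using va vb w1 by auto
    thus ?thesis using v1 v2 by blast
  next
    case False
    thus ?thesis using gac gbc oa ob ega egb by blast
  qed
  then obtain g m where g: "g \<in> carrier_vec 4" "g \<noteq> 0\<^sub>v 4" and og: "g \<bullet>c w1 = 0"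
    and eg: "Sm U *\<^sub>v g = m \<cdot>\<^sub>v g" by blast
  obtain w2 where w2: "w2 \<in> carrier_vec 4" "w2 \<noteq> 0\<^sub>v 4" "Jv w2 = w2" and ew2: "Sm U *\<^sub>v w2 = m \<cdot>\<^sub>v w2"
    and o2: "w2 \<bullet>c w1 = 0"
    using ev_real[OF g eg] w1 og by blast
  obtain f1 where f1: "f1 \<in> carrier_vec 4" "Jv f1 = f1" "f1 \<bullet>c f1 = 1" "Sm U *\<^sub>v f1 = l1 \<cdot>\<^sub>v f1"
    and of1: "\<And>u. u \<in> carrier_vec 4 \<Longrightarrow> w1 \<bullet>c u = 0 \<Longrightarrow> f1 \<bullet>c u = 0"
    using ev_normalize[OF w1 ew1] by blast
  obtain f2 where f2: "f2 \<in> carrier_vec 4" "Jv f2 = f2" "f2 \<bullet>c f2 = 1" "Sm U *\<^sub>v f2 = m \<cdot>\<^sub>v f2"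
    and of2: "\<And>u. u \<in> carrier_vec 4 \<Longrightarrow> w2 \<bullet>c u = 0 \<Longrightarrow> f2 \<bullet>c u = 0"
    using ev_normalize[OF w2 ew2] by blast
  have "f2 \<bullet>c w1 = 0" using of2[OF w1(1) o2] .
  hence "w1 \<bullet>c f2 = 0" using ip_sym[OF w1(1) f2(1)] by simp
  hence "f1 \<bullet>c f2 = 0" using of1[OF f2(1)] by simp
  thus ?thesis using f1 f2 by blast
qed

end


lemma adj_mult:
  fixes A B :: "complex mat"
  assumes "A \<in> carrier_mat n m" "B \<in> carrier_mat m k"
  shows "adj (A * B) = adj B * adj A"
  using assms by (intro eq_matI) (auto simp: adj_def scalar_prod_def mult.commute)

lemma unitary_mult:
  assumes A: "unitary n A" and B: "unitary n B"
  shows "unitary n (A * B)"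
proof -
  have Ac: "A \<in> carrier_mat n n" and Bc: "B \<in> carrier_mat n n" using A B unitary_carrier by auto
  have a1: "adj A * A = 1\<^sub>m n" "A * adj A = 1\<^sub>m n" and b1: "adj B * B = 1\<^sub>m n" "B * adj B = 1\<^sub>m n"
    using A B unfolding unitary_def by auto
  have aA: "adj A \<in> carrier_mat n n" and aB: "adj B \<in> carrier_mat n n" using Ac Bc by auto
  have "adj (A * B) * (A * B) = adj B * (adj A * (A * B))"
    unfolding adj_mult[OF Ac Bc] by (meson assoc_mult_mat aB aA mult_carrier_mat Ac Bc)
  also have "adj A * (A * B) = (adj A * A) * B" by (rule assoc_mult_mat[symmetric, OF aA Ac Bc])
  also have "adj B * (adj A * A * B) = 1\<^sub>m n" using a1 b1 Bc aB by simp
  finally have 1: "adj (A * B) * (A * B) = 1\<^sub>m n" .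
  have "(A * B) * adj (A * B) = A * (B * (adj B * adj A))"
    unfolding adj_mult[OF Ac Bc] by (meson assoc_mult_mat aB aA mult_carrier_mat Ac Bc)
  also have "B * (adj B * adj A) = (B * adj B) * adj A" by (rule assoc_mult_mat[symmetric, OF Bc aB aA])
  also have "A * (B * adj B * adj A) = 1\<^sub>m n" using a1 b1 Ac aA left_mult_one_mat[OF aA] by simp
  finally have 2: "(A * B) * adj (A * B) = 1\<^sub>m n" .
  show ?thesis unfolding unitary_def using 1 2 Ac Bc by auto
qed

lemma botCNOT_dim[simp]: "dim_row botCNOT = 4" "dim_col botCNOT = 4"
  by (simp_all add: botCNOT_def mat_of_rows_list_def)
lemma botCNOT_carrier[simp]: "botCNOT \<in> carrier_mat 4 4"
  by (rule carrier_matI) simp_all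
lemma botCNOT_idx: assumes i: "i < 4" and j: "j < 4" shows "botCNOT $$ (i,j) =
   (if (i = 0 \<and> j = 0) \<or> (i = 2 \<and> j = 2) \<or> (i = 1 \<and> j = 3) \<or> (i = 3 \<and> j = 1) then 1 else 0)"
proof -
  have "botCNOT $$ (i,j) = [[1,0,0,0],[0,0,0,1],[0,0,1,0],[0,1,0,0]] ! i ! j"
    unfolding botCNOT_def mat_of_rows_list_def using i j by simp
  thus ?thesis using less4[OF i] less4[OF j] by (elim disjE) simp_all
qed
lemma div2_less: "(i::nat) < 4 \<Longrightarrow> i div 2 < 2" by auto

lemma botCNOT_sq: "botCNOT * botCNOT = 1\<^sub>m 4"
proof (rule eq_matI)
  fix i j assume "i < dim_row (1\<^sub>m 4 :: complex mat)" "j < dim_col (1\<^sub>m 4 :: complex mat)"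
  hence i: "i < 4" and j: "j < 4" by auto
  show "(botCNOT * botCNOT) $$ (i, j) = (1\<^sub>m 4 :: complex mat) $$ (i, j)"
    using i j by (simp add: scalar_prod_def sum4 botCNOT_idx)
qed auto

lemma kron2_carrier[simp]: "kron2 A B \<in> carrier_mat 4 4" by (simp add: kron2_def)
lemma kron2_dim[simp]: "dim_row (kron2 A B) = 4" "dim_col (kron2 A B) = 4" by (simp_all add: kron2_def)

lemma adj_kron2:
  assumes "A \<in> carrier_mat 2 2" "B \<in> carrier_mat 2 2"
  shows "adj (kron2 A B) = kron2 (adj A) (adj B)"
proof (rule eq_matI)
  fix i j assume "i < dim_row (kron2 (adj A) (adj B))" "j < dim_col (kron2 (adj A) (adj B))"
  hence i: "i < 4" and j: "j < 4" by auto
  show "adj (kron2 A B) $$ (i, j) = kron2 (adj A) (adj B) $$ (i, j)"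
    using i j assms div2_less[OF i] div2_less[OF j] by (simp add: adj_def kron2_def)
qed (auto simp: adj_def)

lemma kron2_mult:
  assumes A: "A \<in> carrier_mat 2 2" and B: "B \<in> carrier_mat 2 2"
    and C: "C \<in> carrier_mat 2 2" and D: "D \<in> carrier_mat 2 2"
  shows "kron2 A B * kron2 C D = kron2 (A * C) (B * D)"
proof (rule eq_matI)
  fix i j assume "i < dim_row (kron2 (A * C) (B * D))" "j < dim_col (kron2 (A * C) (B * D))"
  hence i: "i < 4" and j: "j < 4" by auto
  show "(kron2 A B * kron2 C D) $$ (i, j) = kron2 (A * C) (B * D) $$ (i, j)"
    using i j A B C D div2_less[OF i] div2_less[OF j]
    by (simp add: kron2_def scalar_prod_def sum4 sum2 algebra_simps)
qed auto

lemma kron2_one: "kron2 (1\<^sub>m 2) (1\<^sub>m 2) = 1\<^sub>m 4"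
proof (rule eq_matI)
  fix i j assume "i < dim_row (1\<^sub>m 4 :: complex mat)" "j < dim_col (1\<^sub>m 4 :: complex mat)"
  hence i: "i < 4" and j: "j < 4" by auto
  show "kron2 (1\<^sub>m 2) (1\<^sub>m 2) $$ (i, j) = (1\<^sub>m 4 :: complex mat) $$ (i, j)"
    using less4[OF i] less4[OF j] by (elim disjE) (simp_all add: kron2_def)
qed (auto simp: kron2_def)

lemma kron2_unitary:
  assumes A: "unitary 2 A" and B: "unitary 2 B"
  shows "unitary 4 (kron2 A B)"
proof -
  have Ac: "A \<in> carrier_mat 2 2" and Bc: "B \<in> carrier_mat 2 2" using A B unitary_carrier by auto
  have a1: "adj A * A = 1\<^sub>m 2" "A * adj A = 1\<^sub>m 2" and b1: "adj B * B = 1\<^sub>m 2" "B * adj B = 1\<^sub>m 2"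
    using A B unfolding unitary_def by auto
  show ?thesis unfolding unitary_def adj_kron2[OF Ac Bc]
    using kron2_mult[of "adj A" "adj B" A B] kron2_mult[of A B "adj A" "adj B"] Ac Bc a1 b1 kron2_one
    by auto
qed

lemma ctrl_carrier: "U3 \<in> carrier_mat 2 2 \<Longrightarrow> ctrl U3 \<in> carrier_mat 4 4"
  unfolding ctrl_def using four_block_carrier_mat[of "1\<^sub>m 2" 2 2 U3 2 2] by simp

lemma ctrl_idx: "U3 \<in> carrier_mat 2 2 \<Longrightarrow> i < 4 \<Longrightarrow> j < 4 \<Longrightarrow> ctrl U3 $$ (i,j) =
  (if i < 2 \<and> j < 2 then (if i = j then 1 else 0) else if 2 \<le> i \<and> 2 \<le> j then U3 $$ (i-2, j-2) else 0)"
  unfolding ctrl_def by auto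

lemma kron2_one_idx: "i < 4 \<Longrightarrow> j < 4 \<Longrightarrow> kron2 (1\<^sub>m 2) U4 $$ (i,j) =
  (if i div 2 = j div 2 then U4 $$ (i mod 2, j mod 2) else 0)"
  unfolding kron2_def using div2_less[of i] div2_less[of j] by auto

lemma bb: "X \<in> carrier_mat 4 n \<Longrightarrow> botCNOT * (botCNOT * X) = X"
  using assoc_mult_mat[OF botCNOT_carrier botCNOT_carrier, of X n] botCNOT_sq by simp

lemma assemble:
  fixes V :: "complex mat"
  assumes V: "unitary 4 V"
    and z: "V$$(1,0)=0" "V$$(2,0)=0" "V$$(1,3)=0" "V$$(2,3)=0"
      "V$$(0,1)=0" "V$$(0,2)=0" "V$$(3,1)=0" "V$$(3,2)=0"
  shows "\<exists>U3 U4. unitary 2 U3 \<and> unitary 2 U4 \<and> V = botCNOT * ctrl U3 * kron2 (1\<^sub>m 2) U4 * botCNOT"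
proof -
  have Vc: "V \<in> carrier_mat 4 4" and a1: "adj V * V = 1\<^sub>m 4" and a2: "V * adj V = 1\<^sub>m 4"
    using V unfolding unitary_def by auto
  have z': "V$$(Suc 0,0)=0" "V$$(Suc 0,3)=0" "V$$(0,Suc 0)=0" "V$$(3,Suc 0)=0" using z by simp_all
  have E: "(\<Sum>k\<in>{0..<4}. cnj (V$$(k,i)) * V$$(k,j)) = (if i = j then 1 else 0)" if "i < 4" "j < 4" for i j
    using arg_cong[OF a1, of "\<lambda>M. M $$ (i,j)"] that Vc by (simp add: adj_def scalar_prod_def)
  have F: "(\<Sum>k\<in>{0..<4}. V$$(i,k) * cnj (V$$(j,k))) = (if i = j then 1 else 0)" if "i < 4" "j < 4" for i j
    using arg_cong[OF a2, of "\<lambda>M. M $$ (i,j)"] that Vc by (simp add: adj_def scalar_prod_def)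
  define U4 where "U4 = mat 2 2 (\<lambda>(a,b). V$$(3*a, 3*b))"
  define D22 where "D22 = mat 2 2 (\<lambda>(a,b). V$$(2-a, 2-b))"
  have U4c: "U4 \<in> carrier_mat 2 2" and D22c: "D22 \<in> carrier_mat 2 2" unfolding U4_def D22_def by auto
  have U4u: "unitary 2 U4"
    unfolding unitary_def
  proof (intro conjI)
    show "U4 \<in> carrier_mat 2 2" by fact
    show "adj U4 * U4 = 1\<^sub>m 2"
    proof (rule eq_matI)
      fix a b assume "a < dim_row (1\<^sub>m 2 :: complex mat)" "b < dim_col (1\<^sub>m 2 :: complex mat)"
      hence a: "a < 2" and b: "b < 2" by auto
      show "(adj U4 * U4) $$ (a, b) = (1\<^sub>m 2 :: complex mat) $$ (a, b)"
        using less2[OF a] less2[OF b] E[of 0 0] E[of 0 3] E[of 3 0] E[of 3 3] z z'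
        by (elim disjE) (simp_all add: U4_def adj_def scalar_prod_def sum2 sum4)
    qed (auto simp: U4_def adj_def)
    show "U4 * adj U4 = 1\<^sub>m 2"
    proof (rule eq_matI)
      fix a b assume "a < dim_row (1\<^sub>m 2 :: complex mat)" "b < dim_col (1\<^sub>m 2 :: complex mat)"
      hence a: "a < 2" and b: "b < 2" by auto
      show "(U4 * adj U4) $$ (a, b) = (1\<^sub>m 2 :: complex mat) $$ (a, b)"
        using less2[OF a] less2[OF b] F[of 0 0] F[of 0 3] F[of 3 0] F[of 3 3] z z'
        by (elim disjE) (simp_all add: U4_def adj_def scalar_prod_def sum2 sum4)
    qed (auto simp: U4_def adj_def)
  qed
  have D22u: "unitary 2 D22"
    unfolding unitary_def
  proof (intro conjI)
    show "D22 \<in> carrier_mat 2 2" by fact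
    show "adj D22 * D22 = 1\<^sub>m 2"
    proof (rule eq_matI)
      fix a b assume "a < dim_row (1\<^sub>m 2 :: complex mat)" "b < dim_col (1\<^sub>m 2 :: complex mat)"
      hence a: "a < 2" and b: "b < 2" by auto
      show "(adj D22 * D22) $$ (a, b) = (1\<^sub>m 2 :: complex mat) $$ (a, b)"
        using less2[OF a] less2[OF b] E[of 1 1] E[of 1 2] E[of 2 1] E[of 2 2] z z'
        by (elim disjE) (simp_all add: D22_def adj_def scalar_prod_def sum2 sum4 add.commute)
    qed (auto simp: D22_def adj_def)
    show "D22 * adj D22 = 1\<^sub>m 2"
    proof (rule eq_matI)
      fix a b assume "a < dim_row (1\<^sub>m 2 :: complex mat)" "b < dim_col (1\<^sub>m 2 :: complex mat)"
      hence a: "a < 2" and b: "b < 2" by auto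
      show "(D22 * adj D22) $$ (a, b) = (1\<^sub>m 2 :: complex mat) $$ (a, b)"
        using less2[OF a] less2[OF b] F[of 1 1] F[of 1 2] F[of 2 1] F[of 2 2] z z'
        by (elim disjE) (simp_all add: D22_def adj_def scalar_prod_def sum2 sum4 add.commute)
    qed (auto simp: D22_def adj_def)
  qed
  define U3 where "U3 = D22 * adj U4"
  have U3u: "unitary 2 U3" unfolding U3_def by (rule unitary_mult[OF D22u unitary_adj[OF U4u]])
  have U3c: "U3 \<in> carrier_mat 2 2" using U3u unitary_carrier by blast
  have "U3 * U4 = D22 * (adj U4 * U4)" unfolding U3_def
    by (rule assoc_mult_mat[OF D22c adj_carrier[OF U4c] U4c])
  hence U34: "U3 * U4 = D22" using U4u D22c unfolding unitary_def by simp
  have UU: "U3$$(a,0) * U4$$(0,b) + U3$$(a,1) * U4$$(1,b) = V$$(2-a, 2-b)" if "a < 2" "b < 2" for a b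
    using arg_cong[OF U34, of "\<lambda>M. M $$ (a,b)"] that U3c U4c
    by (simp add: scalar_prod_def sum2 D22_def)
  define D where "D = botCNOT * V * botCNOT"
  have DX: "D = ctrl U3 * kron2 (1\<^sub>m 2) U4"
  proof (rule eq_matI)
    fix i j assume "i < dim_row (ctrl U3 * kron2 (1\<^sub>m 2) U4)" "j < dim_col (ctrl U3 * kron2 (1\<^sub>m 2) U4)"
    hence i: "i < 4" and j: "j < 4" using ctrl_carrier[OF U3c] by auto
    have u: "U3$$(0,0) * U4$$(0,0) + U3$$(0,1) * U4$$(1,0) = V$$(2, 2)"
      "U3$$(0,0) * U4$$(0,1) + U3$$(0,1) * U4$$(1,1) = V$$(2, 1)"
      "U3$$(1,0) * U4$$(0,0) + U3$$(1,1) * U4$$(1,0) = V$$(1, 2)"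
      "U3$$(1,0) * U4$$(0,1) + U3$$(1,1) * U4$$(1,1) = V$$(1, 1)"
      using UU[of 0 0] UU[of 0 1] UU[of 1 0] UU[of 1 1] by simp_all
    have cd: "dim_row (ctrl U3) = 4" "dim_col (ctrl U3) = 4" using ctrl_carrier[OF U3c] by auto
    have u4: "U4 $$ (0,0) = V$$(0,0)" "U4 $$ (0,1) = V$$(0,3)" "U4 $$ (1,0) = V$$(3,0)" "U4 $$ (1,1) = V$$(3,3)"
      unfolding U4_def by simp_all
    show "D $$ (i, j) = (ctrl U3 * kron2 (1\<^sub>m 2) U4) $$ (i, j)"
      unfolding D_def using less4[OF i] less4[OF j] u u4 z z' Vc U3c ctrl_carrier[OF U3c]
      by (elim disjE) (simp_all add: scalar_prod_def sum4 botCNOT_idx ctrl_idx kron2_one_idx cd)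
  qed (use ctrl_carrier[OF U3c] in \<open>auto simp: D_def\<close>)
  have "botCNOT * ctrl U3 * kron2 (1\<^sub>m 2) U4 * botCNOT = botCNOT * D * botCNOT"
    unfolding DX by (subst assoc_mult_mat[OF botCNOT_carrier ctrl_carrier[OF U3c] kron2_carrier]) (rule refl)
  also have "\<dots> = V"
  proof -
    have 1: "botCNOT * V * botCNOT = botCNOT * (V * botCNOT)"
      by (rule assoc_mult_mat[OF botCNOT_carrier Vc botCNOT_carrier])
    have 2: "botCNOT * (botCNOT * (V * botCNOT)) = V * botCNOT" by (rule bb[of _ 4]) (use Vc in simp)
    have 3: "V * botCNOT * botCNOT = V * (botCNOT * botCNOT)"
      by (rule assoc_mult_mat[OF Vc botCNOT_carrier botCNOT_carrier])
    show ?thesis unfolding D_def 1 2 3 botCNOT_sq using Vc by simp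
  qed
  finally show ?thesis using U3u U4u by auto
qed



lemma two_eq:
  fixes a X Y :: complex
  assumes e1: "a * X + (\<i>*a) * Y = 0" and e2: "(-a) * X + (\<i>*a) * Y = 0" and a: "a \<noteq> 0"
  shows "X = 0 \<and> Y = 0"
proof -
  have "2 * a * X = (a * X + (\<i>*a) * Y) - ((-a) * X + (\<i>*a) * Y)" by (simp add: algebra_simps)
  hence x: "2 * a * X = 0" unfolding e1 e2 by simp
  have "2 * \<i> * a * Y = (a * X + (\<i>*a) * Y) + ((-a) * X + (\<i>*a) * Y)" by (simp add: algebra_simps)
  hence y: "2 * \<i> * a * Y = 0" unfolding e1 e2 by simp
  show ?thesis using x y a by simp
qed

lemma ip_lin_l: fixes a b c :: "complex vec"
  shows "a \<in> carrier_vec 4 \<Longrightarrow> b \<in> carrier_vec 4 \<Longrightarrow> c \<in> carrier_vec 4 \<Longrightarrow>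
  (x \<cdot>\<^sub>v a + y \<cdot>\<^sub>v b) \<bullet>c c = x * (a \<bullet>c c) + y * (b \<bullet>c c)"
  by (simp add: scalar_prod_def sum4 algebra_simps)

lemma ip_lin_r: fixes a b c :: "complex vec"
  shows "a \<in> carrier_vec 4 \<Longrightarrow> b \<in> carrier_vec 4 \<Longrightarrow> c \<in> carrier_vec 4 \<Longrightarrow>
  c \<bullet>c (x \<cdot>\<^sub>v a + y \<cdot>\<^sub>v b) = cnj x * (c \<bullet>c a) + cnj y * (c \<bullet>c b)"
  by (simp add: scalar_prod_def sum4 algebra_simps)

lemma mv_lin: fixes M :: "complex mat"
  shows "M \<in> carrier_mat 4 4 \<Longrightarrow> a \<in> carrier_vec 4 \<Longrightarrow> b \<in> carrier_vec 4 \<Longrightarrow>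
  M *\<^sub>v (x \<cdot>\<^sub>v a + y \<cdot>\<^sub>v b) = x \<cdot>\<^sub>v (M *\<^sub>v a) + y \<cdot>\<^sub>v (M *\<^sub>v b)"
  by (simp add: mult_add_distrib_mat_vec[of _ 4 4] mult_mat_vec[of _ 4 4])

lemma col_orth:
  fixes L :: "complex mat"
  assumes L: "unitary 4 L" and a: "a < 4" and b: "b < 4"
  shows "col L a \<bullet>c col L b = (if a = b then 1 else 0)"
proof -
  have Lc: "L \<in> carrier_mat 4 4" and e: "adj L * L = 1\<^sub>m 4" using L unfolding unitary_def by auto
  have "(adj L * L) $$ (b,a) = (if a = b then 1 else 0)" using e a b by auto
  thus ?thesis using Lc a b by (simp add: adj_def scalar_prod_def mult.commute)
qed

lemma V_entry:
  fixes L1 U L2 :: "complex mat"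
  assumes "L1 \<in> carrier_mat 4 4" "U \<in> carrier_mat 4 4" "L2 \<in> carrier_mat 4 4" "i < 4" "j < 4"
  shows "(adj L1 * U * L2) $$ (i,j) = (U *\<^sub>v col L2 j) \<bullet>c col L1 i"
  using assms by (simp add: adj_def scalar_prod_def sum4 algebra_simps)

lemma block_zero:
  fixes U L1 L2 :: "complex mat" and f1 f2 g1 g2 :: "complex vec"
  assumes U: "unitary 4 U" and L1: "unitary 4 L1" and L2: "unitary 4 L2"
    and fc: "f1 \<in> carrier_vec 4" "f2 \<in> carrier_vec 4" and gc: "g1 \<in> carrier_vec 4" "g2 \<in> carrier_vec 4"
    and Uf: "U *\<^sub>v f1 = c1 \<cdot>\<^sub>v g1" "U *\<^sub>v f2 = c2 \<cdot>\<^sub>v g2"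
    and gU: "g1 = z1 \<cdot>\<^sub>v (U *\<^sub>v f1)" "g2 = z2 \<cdot>\<^sub>v (U *\<^sub>v f2)"
    and a: "a \<noteq> 0"
    and L20: "col L2 0 = a \<cdot>\<^sub>v f1 + (\<i> * a) \<cdot>\<^sub>v f2" and L23: "col L2 3 = (- a) \<cdot>\<^sub>v f1 + (\<i> * a) \<cdot>\<^sub>v f2"
    and L10: "col L1 0 = a \<cdot>\<^sub>v g1 + (\<i> * a) \<cdot>\<^sub>v g2" and L13: "col L1 3 = (- a) \<cdot>\<^sub>v g1 + (\<i> * a) \<cdot>\<^sub>v g2"
  defines "V \<equiv> adj L1 * U * L2"
  shows "V$$(1,0)=0" "V$$(2,0)=0" "V$$(1,3)=0" "V$$(2,3)=0"
      "V$$(0,1)=0" "V$$(0,2)=0" "V$$(3,1)=0" "V$$(3,2)=0"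
proof -
  have Uc: "U \<in> carrier_mat 4 4" and L1c: "L1 \<in> carrier_mat 4 4" and L2c: "L2 \<in> carrier_mat 4 4"
    using U L1 L2 unitary_carrier by auto
  have cc1: "col L1 k \<in> carrier_vec 4" for k using L1c by (intro carrier_vecI) simp
  have cc2: "col L2 k \<in> carrier_vec 4" for k using L2c by (intro carrier_vecI) simp
  have Vij: "V $$ (i,j) = (U *\<^sub>v col L2 j) \<bullet>c col L1 i" if "i < 4" "j < 4" for i j
    unfolding V_def using V_entry[OF L1c Uc L2c that] .
  have fo: "f1 \<bullet>c col L2 k = 0 \<and> f2 \<bullet>c col L2 k = 0" if k: "k = 1 \<or> k = 2" for k
  proof -
    have k4: "k < 4" "k \<noteq> 0" "k \<noteq> 3" using k by auto
    have "col L2 0 \<bullet>c col L2 k = 0" using col_orth[OF L2, of 0 k] k4 by simp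
    hence e1: "a * (f1 \<bullet>c col L2 k) + (\<i> * a) * (f2 \<bullet>c col L2 k) = 0"
      unfolding L20 using ip_lin_l[OF fc cc2] by simp
    have "col L2 3 \<bullet>c col L2 k = 0" using col_orth[OF L2, of 3 k] k4 by simp
    hence e2: "(- a) * (f1 \<bullet>c col L2 k) + (\<i> * a) * (f2 \<bullet>c col L2 k) = 0"
      unfolding L23 using ip_lin_l[OF fc cc2] by simp
    show ?thesis using two_eq[OF e1 e2 a] .
  qed
  have go: "g1 \<bullet>c col L1 k = 0 \<and> g2 \<bullet>c col L1 k = 0" if k: "k = 1 \<or> k = 2" for k
  proof -
    have k4: "k < 4" "k \<noteq> 0" "k \<noteq> 3" using k by auto
    have "col L1 0 \<bullet>c col L1 k = 0" using col_orth[OF L1, of 0 k] k4 by simp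
    hence e1: "a * (g1 \<bullet>c col L1 k) + (\<i> * a) * (g2 \<bullet>c col L1 k) = 0"
      unfolding L10 using ip_lin_l[OF gc cc1] by simp
    have "col L1 3 \<bullet>c col L1 k = 0" using col_orth[OF L1, of 3 k] k4 by simp
    hence e2: "(- a) * (g1 \<bullet>c col L1 k) + (\<i> * a) * (g2 \<bullet>c col L1 k) = 0"
      unfolding L13 using ip_lin_l[OF gc cc1] by simp
    show ?thesis using two_eq[OF e1 e2 a] .
  qed
  have A: "(U *\<^sub>v (x \<cdot>\<^sub>v f1 + y \<cdot>\<^sub>v f2)) \<bullet>c col L1 k = 0" if k: "k = 1 \<or> k = 2" for x y k
  proof -
    have "U *\<^sub>v (x \<cdot>\<^sub>v f1 + y \<cdot>\<^sub>v f2) = (x * c1) \<cdot>\<^sub>v g1 + (y * c2) \<cdot>\<^sub>v g2"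
      using mv_lin[OF Uc fc] Uf by (simp add: smult_smult_assoc)
    thus ?thesis using ip_lin_l[OF gc cc1] go[OF k] by simp
  qed
  have B: "(U *\<^sub>v col L2 k) \<bullet>c (x \<cdot>\<^sub>v g1 + y \<cdot>\<^sub>v g2) = 0" if k: "k = 1 \<or> k = 2" for x y k
  proof -
    have "x \<cdot>\<^sub>v g1 + y \<cdot>\<^sub>v g2 = U *\<^sub>v ((x * z1) \<cdot>\<^sub>v f1 + (y * z2) \<cdot>\<^sub>v f2)"
      using mv_lin[OF Uc fc] gU by (simp add: smult_smult_assoc)
    hence "(U *\<^sub>v col L2 k) \<bullet>c (x \<cdot>\<^sub>v g1 + y \<cdot>\<^sub>v g2) = col L2 k \<bullet>c ((x * z1) \<cdot>\<^sub>v f1 + (y * z2) \<cdot>\<^sub>v f2)"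
      using unitary_iso[OF U cc2] fc by simp
    also have "\<dots> = cnj (x * z1) * (col L2 k \<bullet>c f1) + cnj (y * z2) * (col L2 k \<bullet>c f2)"
      by (rule ip_lin_r[OF fc cc2])
    also have "\<dots> = 0" using fo[OF k] ip_sym[OF fc(1) cc2] ip_sym[OF fc(2) cc2] by simp
    finally show ?thesis .
  qed
  show "V$$(1,0)=0" using Vij[of 1 0] A[where x=a and y="\<i>*a" and k=1] unfolding L20 by simp
  show "V$$(2,0)=0" using Vij[of 2 0] A[where x=a and y="\<i>*a" and k=2] unfolding L20 by simp
  show "V$$(1,3)=0" using Vij[of 1 3] A[where x="-a" and y="\<i>*a" and k=1] unfolding L23 by simp
  show "V$$(2,3)=0" using Vij[of 2 3] A[where x="-a" and y="\<i>*a" and k=2] unfolding L23 by simp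
  show "V$$(0,1)=0" using Vij[of 0 1] B[where x=a and y="\<i>*a" and k=1] unfolding L10 by simp
  show "V$$(0,2)=0" using Vij[of 0 2] B[where x=a and y="\<i>*a" and k=2] unfolding L10 by simp
  show "V$$(3,1)=0" using Vij[of 3 1] B[where x="-a" and y="\<i>*a" and k=1] unfolding L13 by simp
  show "V$$(3,2)=0" using Vij[of 3 2] B[where x="-a" and y="\<i>*a" and k=2] unfolding L13 by simp
qed



lemma jreal_comp:
  assumes "Jv f = f"
  shows "f$3 = - cnj (f$0)" "f$2 = cnj (f$1)"
proof -
  have "Jv f $ 0 = f $ 0" "Jv f $ 1 = f $ 1" using assms by simp_all
  thus "f$3 = - cnj (f$0)" "f$2 = cnj (f$1)" unfolding Jv_def by (auto simp: complex_eq_iff)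
qed

lemma pf:
  fixes f1 f2 :: "complex vec"
  assumes fc: "f1 \<in> carrier_vec 4" "f2 \<in> carrier_vec 4" and J: "Jv f1 = f1" "Jv f2 = f2"
    and n: "f1 \<bullet>c f1 = 1" "f2 \<bullet>c f2 = 1" "f1 \<bullet>c f2 = 0"
  defines "p \<equiv> f1 + \<i> \<cdot>\<^sub>v f2"
  shows "p \<in> carrier_vec 4" "p$0 * p$3 = p$1 * p$2" "p \<bullet>c p = 2" "Jv p = f1 - \<i> \<cdot>\<^sub>v f2"
proof -
  show pc: "p \<in> carrier_vec 4" unfolding p_def using fc by simp
  note c1 = jreal_comp[OF J(1)] and c2 = jreal_comp[OF J(2)]
  have "2 * (p$0 * p$3 - p$1 * p$2) = - (f1 \<bullet>c f1) + (f2 \<bullet>c f2) - 2 * \<i> * (f1 \<bullet>c f2)"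
    unfolding p_def using fc c1 c2 by (simp add: scalar_prod_def sum4 algebra_simps)
  hence "2 * (p$0 * p$3 - p$1 * p$2) = 0" using n by simp
  thus "p$0 * p$3 = p$1 * p$2" by simp
  have "p \<bullet>c p = (f1 \<bullet>c f1) + \<i> * (f2 \<bullet>c f1) - \<i> * (f1 \<bullet>c f2) + (f2 \<bullet>c f2)"
    unfolding p_def using fc by (simp add: scalar_prod_def sum4 algebra_simps)
  also have "\<dots> = 2" using n ip_sym[OF fc(1) fc(2)] by simp
  finally show "p \<bullet>c p = 2" .
  show "Jv p = f1 - \<i> \<cdot>\<^sub>v f2" unfolding p_def using fc J
    by (simp add: Jv_add Jv_smult) (intro eq_vecI; simp)
qed

context uctx begin

lemma g_props:
  assumes f: "f \<in> carrier_vec 4" "Jv f = f" "f \<bullet>c f = 1" and e: "Sm U *\<^sub>v f = m \<cdot>\<^sub>v f"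
  defines "z \<equiv> csqrt (cnj m)"
  shows "Jv (z \<cdot>\<^sub>v (U *\<^sub>v f)) = z \<cdot>\<^sub>v (U *\<^sub>v f)" "U *\<^sub>v f = cnj z \<cdot>\<^sub>v (z \<cdot>\<^sub>v (U *\<^sub>v f))"
    "z * cnj z = 1"
proof -
  have f0: "f \<noteq> 0\<^sub>v 4" using f by auto
  have mm: "m * cnj m = 1" by (rule ev_norm[OF f(1) f0 e])
  have "cmod m ^ 2 = 1" using mm by (metis complex_norm_square norm_one of_real_eq_1_iff of_real_power)
  hence cm: "cmod m = 1" using norm_ge_zero[of m] by (auto simp: power2_eq_1_iff)
  have "cmod z ^ 2 = 1" unfolding z_def using cm by simp
  thus zz: "z * cnj z = 1" by (metis mult_cnj_self of_real_1)
  have z2: "z * z = cnj m" unfolding z_def by (metis power2_csqrt power2_eq_square)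
  have "Jv (z \<cdot>\<^sub>v (U *\<^sub>v f)) = cnj z \<cdot>\<^sub>v Jv (U *\<^sub>v f)" using f by (simp add: Jv_smult)
  also have "Jv (U *\<^sub>v f) = U *\<^sub>v Jv (Sm U *\<^sub>v f)" using U_J[OF f(1)] by simp
  also have "\<dots> = U *\<^sub>v (cnj m \<cdot>\<^sub>v f)" unfolding e using f by (simp add: Jv_smult)
  also have "\<dots> = cnj m \<cdot>\<^sub>v (U *\<^sub>v f)" using f by (simp add: mult_mat_vec[OF Uc])
  also have "cnj z \<cdot>\<^sub>v (cnj m \<cdot>\<^sub>v (U *\<^sub>v f)) = (cnj z * cnj m) \<cdot>\<^sub>v (U *\<^sub>v f)" by (simp add: smult_smult_assoc)
  also have "cnj z * cnj m = z" using zz z2 by (metis mult.assoc mult.commute mult.left_neutral)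
  finally show "Jv (z \<cdot>\<^sub>v (U *\<^sub>v f)) = z \<cdot>\<^sub>v (U *\<^sub>v f)" .
  show "U *\<^sub>v f = cnj z \<cdot>\<^sub>v (z \<cdot>\<^sub>v (U *\<^sub>v f))" using zz by (simp add: smult_smult_assoc mult.commute)
qed

end



lemma assoc4: "A \<in> carrier_mat 4 4 \<Longrightarrow> B \<in> carrier_mat 4 4 \<Longrightarrow> C \<in> carrier_mat 4 4 \<Longrightarrow>
  (A * B) * C = A * (B * (C :: complex mat))"
  by (rule assoc_mult_mat)
lemma mc4: "A \<in> carrier_mat 4 4 \<Longrightarrow> B \<in> carrier_mat 4 4 \<Longrightarrow> A * (B :: complex mat) \<in> carrier_mat 4 4"
  by (rule mult_carrier_mat)
lemma uinv4: "unitary 4 L \<Longrightarrow> X \<in> carrier_mat 4 4 \<Longrightarrow> L * (adj L * X) = X"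
  unfolding unitary_def using assoc_mult_mat[of L 4 4 "adj L" 4 X 4] by auto
lemma uinv4': "unitary 4 L \<Longrightarrow> X \<in> carrier_mat 4 4 \<Longrightarrow> X * (L * adj L) = X"
  unfolding unitary_def by auto

theorem proposition3:
  fixes U :: "complex mat"
  assumes "unitary 4 U"
  shows "\<exists>U1 U2 U3 U4 U5 U6. unitary 2 U1 \<and> unitary 2 U2 \<and> unitary 2 U3 \<and>
           unitary 2 U4 \<and> unitary 2 U5 \<and> unitary 2 U6 \<and>
           U = kron2 U1 U2 * botCNOT * ctrl U3 * kron2 (1\<^sub>m 2) U4 * botCNOT * kron2 U5 U6"
proof -
  interpret uctx U by unfold_locales (rule assms)
  obtain f1 f2 m1 m2 where f1c: "f1 \<in> carrier_vec 4" and f2c: "f2 \<in> carrier_vec 4"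
    and J1: "Jv f1 = f1" and J2: "Jv f2 = f2" and n1: "f1 \<bullet>c f1 = 1" and n2: "f2 \<bullet>c f2 = 1"
    and n12: "f1 \<bullet>c f2 = 0" and e1: "Sm U *\<^sub>v f1 = m1 \<cdot>\<^sub>v f1" and e2: "Sm U *\<^sub>v f2 = m2 \<cdot>\<^sub>v f2"
    using real_pair by blast
  define z1 where "z1 = csqrt (cnj m1)"
  define z2 where "z2 = csqrt (cnj m2)"
  define g1 where "g1 = z1 \<cdot>\<^sub>v (U *\<^sub>v f1)"
  define g2 where "g2 = z2 \<cdot>\<^sub>v (U *\<^sub>v f2)"
  note G1 = g_props[OF f1c J1 n1 e1, folded z1_def, folded g1_def]
  note G2 = g_props[OF f2c J2 n2 e2, folded z2_def, folded g2_def]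
  have g1c: "g1 \<in> carrier_vec 4" and g2c: "g2 \<in> carrier_vec 4" unfolding g1_def g2_def using f1c f2c by auto
  have ng1: "g1 \<bullet>c g1 = 1" unfolding g1_def using f1c G1(3) n1
    by (simp add: ip_smult_l ip_smult_r unitary_iso[OF assms] mult.commute)
  have ng2: "g2 \<bullet>c g2 = 1" unfolding g2_def using f2c G2(3) n2
    by (simp add: ip_smult_l ip_smult_r unitary_iso[OF assms] mult.commute)
  have ng12: "g1 \<bullet>c g2 = 0" unfolding g1_def g2_def using f1c f2c n12
    by (simp add: ip_smult_l ip_smult_r unitary_iso[OF assms])
  note P = pf[OF f1c f2c J1 J2 n1 n2 n12]
  note Q = pf[OF g1c g2c G1(1) G2(1) ng1 ng2 ng12]
  obtain A2 B2 where A2: "unitary 2 A2" and B2: "unitary 2 B2"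
    and L20: "\<forall>i<4. kron2 A2 B2 $$ (i,0) = (f1 + \<i> \<cdot>\<^sub>v f2)$i / complex_of_real (sqrt 2)"
    and L23: "\<forall>i<4. kron2 A2 B2 $$ (i,3) = - (Jv (f1 + \<i> \<cdot>\<^sub>v f2))$i / complex_of_real (sqrt 2)"
    using local_from_p[OF P(1-3)] by blast
  obtain A1 B1 where A1: "unitary 2 A1" and B1: "unitary 2 B1"
    and L10: "\<forall>i<4. kron2 A1 B1 $$ (i,0) = (g1 + \<i> \<cdot>\<^sub>v g2)$i / complex_of_real (sqrt 2)"
    and L13: "\<forall>i<4. kron2 A1 B1 $$ (i,3) = - (Jv (g1 + \<i> \<cdot>\<^sub>v g2))$i / complex_of_real (sqrt 2)"
    using local_from_p[OF Q(1-3)] by blast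
  define a where "a = 1 / complex_of_real (sqrt 2)"
  have a0: "a \<noteq> 0" unfolding a_def by simp
  define L1 where "L1 = kron2 A1 B1"
  define L2 where "L2 = kron2 A2 B2"
  have L1u: "unitary 4 L1" unfolding L1_def by (rule kron2_unitary[OF A1 B1])
  have L2u: "unitary 4 L2" unfolding L2_def by (rule kron2_unitary[OF A2 B2])
  have cL20: "col L2 0 = a \<cdot>\<^sub>v f1 + (\<i> * a) \<cdot>\<^sub>v f2"
    using L20 f1c f2c unfolding L2_def a_def by (intro eq_vecI) (auto simp: field_simps)
  have cL23: "col L2 3 = (- a) \<cdot>\<^sub>v f1 + (\<i> * a) \<cdot>\<^sub>v f2"
    using L23 f1c f2c unfolding L2_def a_def P(4) by (intro eq_vecI) (auto simp: field_simps)
  have cL10: "col L1 0 = a \<cdot>\<^sub>v g1 + (\<i> * a) \<cdot>\<^sub>v g2"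
    using L10 g1c g2c unfolding L1_def a_def by (intro eq_vecI) (auto simp: field_simps)
  have cL13: "col L1 3 = (- a) \<cdot>\<^sub>v g1 + (\<i> * a) \<cdot>\<^sub>v g2"
    using L13 g1c g2c unfolding L1_def a_def Q(4) by (intro eq_vecI) (auto simp: field_simps)
  define V where "V = adj L1 * U * L2"
  note Z = block_zero[OF assms L1u L2u f1c f2c g1c g2c G1(2) G2(2) g1_def g2_def a0 cL20 cL23 cL10 cL13,
      folded V_def]
  have Vu: "unitary 4 V" unfolding V_def
    by (rule unitary_mult[OF unitary_mult[OF unitary_adj[OF L1u] assms] L2u])
  obtain U3 U4 where U3: "unitary 2 U3" and U4: "unitary 2 U4"
    and VX: "V = botCNOT * ctrl U3 * kron2 (1\<^sub>m 2) U4 * botCNOT"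
    using assemble[OF Vu Z] by blast
  have U3c: "U3 \<in> carrier_mat 2 2" using U3 unitary_carrier by blast
  have A2c: "A2 \<in> carrier_mat 2 2" and B2c: "B2 \<in> carrier_mat 2 2" using A2 B2 unitary_carrier by auto
  have L1c: "L1 \<in> carrier_mat 4 4" and L2c: "L2 \<in> carrier_mat 4 4" unfolding L1_def L2_def by auto
  have Uc4: "U \<in> carrier_mat 4 4" using assms unitary_carrier by blast
  have "L1 * V * adj L2 = L1 * (adj L1 * (U * (L2 * adj L2)))"
    unfolding V_def using L1c L2c Uc4 by (simp add: assoc4 mc4)
  also have "\<dots> = U" using uinv4[OF L1u] uinv4'[OF L2u] Uc4 by simp
  finally have UV: "U = L1 * V * adj L2" by simp
  have "U = kron2 A1 B1 * botCNOT * ctrl U3 * kron2 (1\<^sub>m 2) U4 * botCNOT * kron2 (adj A2) (adj B2)"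
    unfolding UV VX L1_def L2_def adj_kron2[OF A2c B2c] using ctrl_carrier[OF U3c]
    by (simp add: assoc4 mc4)
  thus ?thesis using A1 B1 U3 U4 unitary_adj[OF A2] unitary_adj[OF B2] by blast
qed


end
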